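(* Consider the planar Problem B with $w=e=(0,1)$ (see context). If $(\rho,C_r,C_b,\varphi)$ is a local solution on $[-\delta,\delta]$, let $\rho_0=\rho(0)$ and $d_0=d_r(0)\,(=d_b(0))$ and $k_0=\rho_0/d_0$. Then $$k_0\le\frac{(\Delta_r-\Delta_b)^2}{4\Delta_r\Delta_b},\qquad \Delta_r=\frac{n_r}{n_r-1},\ \Delta_b=\frac{n_b}{n_b-1}.$$ In other words, if $k_0>\frac{(\Delta_r-\Delta_b)^2}{4\Delta_r\Delta_b}$ there is no local solution with these values of $\rho(0)$ and $d_r(0)$.
   Context: Planar setting: $x(t)=(\sin t,\cos t)$, $e=(0,1)$; refractive indices $n_b>n_r>1$, outside vacuum; $\Phi_\kappa(s)=s-\sqrt{\kappa^2-1+s^2}$. For positive $\rho\in C^2$, the curve $\rho(t)x(t)$ has outer unit normal $\nu_\rho(t)=\dfrac{(\rho\sin t-\rho'\cos t,\ \rho'\sin t+\rho\cos t)}{\sqrt{\rho^2+\rho'^2}}$. For $c\in\{r,b\}$ and a constant $C_c$: $m_c(t)=\frac1{n_c}\big(x(t)-\Phi_{n_c}(x(t)\cdot\nu_\rho(t))\nu_\rho(t)\big)$, $d_c(t)=\dfrac{C_c-\rho(t)(1-\cos t)}{n_c-e\cdot m_c(t)}$, $f_c(t)=\rho(t)x(t)+d_c(t)m_c(t)$; the curve $f_c$ refracts the color-$c$ ray $m_c(t)$ at $f_c(t)$ into $e$ by Snell's law. A local solution of Problem B: $\delta\in(0,\pi/2)$, positive $\rho\in C^2[-\delta,\delta]$,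 constants $C_r,C_b$ with $d_r,d_b>0$ and $f_r,f_b$ having a normal at every point, and a $C^1$ map $\varphi:[-\delta,\delta]\to[-\delta,\delta]$ with $f_r(t)=f_b(\varphi(t))$ for all $|t|\le\delta$. *)

theory Defs
  imports "HOL-Analysis.Analysis"
begin

definition xpt :: "real \<Rightarrow> real \<times> real" where
  "xpt t = (sin t, cos t)"

definition evec :: "real \<times> real" where
  "evec = (0, 1)"

definition Phi :: "real \<Rightarrow> real \<Rightarrow> real" where
  "Phi \<kappa> s = s - sqrt (\<kappa>\<^sup>2 - 1 + s\<^sup>2)"

text \<open>Outer unit normal of the curve rho(t) x(t); rho1 is the derivative of rho.\<close>
definition nu :: "(real \<Rightarrow> real) \<Rightarrow> (real \<Rightarrow> real) \<Rightarrow> real \<Rightarrow> real \<times> real" where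
  "nu rho rho1 t =
     (let r = rho t; r' = rho1 t; N = sqrt (r\<^sup>2 + r'\<^sup>2)
      in ((r * sin t - r' * cos t) / N, (r' * sin t + r * cos t) / N))"

definition mvec :: "real \<Rightarrow> (real \<Rightarrow> real) \<Rightarrow> (real \<Rightarrow> real) \<Rightarrow> real \<Rightarrow> real \<times> real" where
  "mvec n rho rho1 t =
     (1 / n) *\<^sub>R (xpt t - Phi n (xpt t \<bullet> nu rho rho1 t) *\<^sub>R nu rho rho1 t)"

definition dfun :: "real \<Rightarrow> real \<Rightarrow> (real \<Rightarrow> real) \<Rightarrow> (real \<Rightarrow> real) \<Rightarrow> real \<Rightarrow> real" where
  "dfun n C rho rho1 t = (C - rho t * (1 - cos t)) / (n - evec \<bullet> mvec n rho rho1 t)"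

definition ffun :: "real \<Rightarrow> real \<Rightarrow> (real \<Rightarrow> real) \<Rightarrow> (real \<Rightarrow> real) \<Rightarrow> real \<Rightarrow> real \<times> real" where
  "ffun n C rho rho1 t = rho t *\<^sub>R xpt t + dfun n C rho rho1 t *\<^sub>R mvec n rho rho1 t"

definition has_normal_on :: "(real \<Rightarrow> real \<times> real) \<Rightarrow> real set \<Rightarrow> bool" where
  "has_normal_on g S \<longleftrightarrow>
     (\<forall>t\<in>S. \<exists>v. (g has_vector_derivative v) (at t within S) \<and> v \<noteq> 0)"

definition Delta :: "real \<Rightarrow> real" where
  "Delta n = n / (n - 1)"

end

theory Submission
  imports Defs
begin
lemma unit_aux:
  fixes a b c e n s P :: real
  assumes "a\<^sup>2 + b\<^sup>2 = 1" "c\<^sup>2 + e\<^sup>2 = 1" "1 < n" "s = a*c+b*e" "P = s - sqrt (n\<^sup>2 - 1 + s\<^sup>2)"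
  shows "((a - P*c)/n)\<^sup>2 + ((b - P*e)/n)\<^sup>2 = 1"
proof -
  have "1 < n\<^sup>2" using assms(3) by (simp add: one_less_power)
  then have R: "(sqrt (n\<^sup>2 - 1 + s\<^sup>2))\<^sup>2 = n\<^sup>2 - 1 + s\<^sup>2"
    by (intro real_sqrt_pow2) (simp add: add_nonneg_nonneg)
  have "(a - P*c)\<^sup>2 + (b - P*e)\<^sup>2 = (a\<^sup>2+b\<^sup>2) - 2*P * s + P\<^sup>2*(c\<^sup>2+e\<^sup>2)"
    unfolding assms(4) by (simp add: power2_eq_square algebra_simps)
  also have "\<dots> = 1 - 2*P * s + P\<^sup>2" unfolding assms(1,2) by simp
  also have "\<dots> = 1 + (P - s)\<^sup>2 - s\<^sup>2" by (simp add: power2_eq_square algebra_simps)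
  also have "\<dots> = n\<^sup>2" using R unfolding assms(5) by simp
  finally have "(a - P*c)\<^sup>2 + (b - P*e)\<^sup>2 = n\<^sup>2" .
  then show ?thesis using assms(3) by (simp add: power_divide add_divide_distrib[symmetric])
qed

lemma evec_inner: "evec \<bullet> v = snd v" by (simp add: evec_def inner_prod_def)

definition NN :: "(real \<Rightarrow> real) \<Rightarrow> (real \<Rightarrow> real) \<Rightarrow> real \<Rightarrow> real" where
  "NN rho rho1 t = sqrt ((rho t)\<^sup>2 + (rho1 t)\<^sup>2)"

lemma NN_pos: "0 < rho t \<Longrightarrow> 0 < NN rho rho1 t"
  unfolding NN_def by (simp add: add_pos_nonneg)

lemma nu_eq: "nu rho rho1 t = ((rho t * sin t - rho1 t * cos t) / NN rho rho1 t,
    (rho1 t * sin t + rho t * cos t) / NN rho rho1 t)"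
  by (simp add: nu_def Let_def NN_def)

lemma NN_sq: "(NN rho rho1 t)\<^sup>2 = (rho t)\<^sup>2 + (rho1 t)\<^sup>2"
  unfolding NN_def by (simp add: add_nonneg_nonneg)

lemma xnu: assumes "0 < rho t" shows "xpt t \<bullet> nu rho rho1 t = rho t / NN rho rho1 t"
proof -
  have e: "(rho t * sin t - rho1 t * cos t) * sin t + (rho1 t * sin t + rho t * cos t) * cos t
     = rho t * ((sin t)\<^sup>2 + (cos t)\<^sup>2)" by algebra
  have "xpt t \<bullet> nu rho rho1 t = sin t * ((rho t * sin t - rho1 t * cos t) / NN rho rho1 t)
     + cos t * ((rho1 t * sin t + rho t * cos t) / NN rho rho1 t)" by (simp add: xpt_def nu_eq)
  also have "\<dots> = ((rho t * sin t - rho1 t * cos t) * sin t + (rho1 t * sin t + rho t * cos t) * cos t) / NN rho rho1 t"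
    using NN_pos[of rho t rho1, OF assms] by (simp add: field_simps)
  also have "\<dots> = rho t / NN rho rho1 t" unfolding e by simp
  finally show ?thesis .
qed

lemma nu_unit: assumes "0 < rho t"
  shows "(fst (nu rho rho1 t))\<^sup>2 + (snd (nu rho rho1 t))\<^sup>2 = 1"
proof -
  have N: "0 < NN rho rho1 t" using NN_pos assms .
  have "(rho t * sin t - rho1 t * cos t)\<^sup>2 + (rho1 t * sin t + rho t * cos t)\<^sup>2
     = ((rho t)\<^sup>2 + (rho1 t)\<^sup>2) * ((sin t)\<^sup>2 + (cos t)\<^sup>2)" by algebra
  also have "\<dots> = (NN rho rho1 t)\<^sup>2" by (simp only: sin_cos_squared_add NN_sq mult_1_right)
  finally show ?thesis using N by (simp add: nu_eq power_divide add_divide_distrib[symmetric])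
qed

lemma mvec_eq: "mvec n rho rho1 t =
   ((sin t - Phi n (xpt t \<bullet> nu rho rho1 t) * fst (nu rho rho1 t)) / n,
    (cos t - Phi n (xpt t \<bullet> nu rho rho1 t) * snd (nu rho rho1 t)) / n)"
  by (simp add: mvec_def xpt_def prod_eq_iff)

lemma m_unit: assumes "1 < n" "0 < rho t"
  shows "(fst (mvec n rho rho1 t))\<^sup>2 + (snd (mvec n rho rho1 t))\<^sup>2 = 1"
  unfolding mvec_eq fst_conv snd_conv
  by (rule unit_aux[OF _ nu_unit[where rho=rho and t=t, OF assms(2)] assms(1)]) (auto simp: xpt_def Phi_def inner_prod_def)

lemma my_lt: assumes "1 < n" "0 < rho t" shows "snd (mvec n rho rho1 t) < n"
proof -
  have u: "(fst (mvec n rho rho1 t))\<^sup>2 + (snd (mvec n rho rho1 t))\<^sup>2 = 1"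
    using assms by (rule m_unit)
  have "(snd (mvec n rho rho1 t))\<^sup>2 \<le> 1" using u zero_le_power2[of "fst (mvec n rho rho1 t)"] by linarith
  hence "\<bar>snd (mvec n rho rho1 t)\<bar> \<le> 1" by (simp add: abs_square_le_1)
  thus ?thesis using assms(1) by linarith
qed

lemma f_minus: assumes "1 < n" "0 < rho t" "0 < dfun n C rho rho1 t"
  shows "sqrt ((fst (ffun n C rho rho1 t) - rho t * sin t)\<^sup>2 + (snd (ffun n C rho rho1 t) - rho t * cos t)\<^sup>2)
     = dfun n C rho rho1 t"
proof -
  let ?d = "dfun n C rho rho1 t" and ?m = "mvec n rho rho1 t"
  have "(fst (ffun n C rho rho1 t) - rho t * sin t)\<^sup>2 + (snd (ffun n C rho rho1 t) - rho t * cos t)\<^sup>2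
     = ?d\<^sup>2 * ((fst ?m)\<^sup>2 + (snd ?m)\<^sup>2)"
    by (simp add: ffun_def xpt_def power2_eq_square algebra_simps)
  also have "\<dots> = ?d\<^sup>2" using m_unit[of n rho t rho1] assms by simp
  finally show ?thesis using assms(3) by simp
qed

lemma h_const: assumes "1 < n" "0 < rho t" "0 < dfun n C rho rho1 t"
  shows "rho t + n * sqrt ((fst (ffun n C rho rho1 t) - rho t * sin t)\<^sup>2 + (snd (ffun n C rho rho1 t) - rho t * cos t)\<^sup>2)
     - snd (ffun n C rho rho1 t) = C"
proof -
  let ?d = "dfun n C rho rho1 t" and ?m = "mvec n rho rho1 t"
  have ne: "n - snd ?m \<noteq> 0" using my_lt[of n rho t rho1] assms by simp
  have "?d * (n - snd ?m) = C - rho t * (1 - cos t)"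
    using ne by (simp add: dfun_def evec_inner)
  then show ?thesis unfolding f_minus[of n rho t C rho1, OF assms]
    by (simp add: ffun_def xpt_def algebra_simps)
qed

lemma alg1: fixes n x y A B :: real assumes "n \<noteq> 0"
  shows "n * ((x/n) * A + (y/n) * B) = x * A + y * B"
  using assms by (simp add: field_simps)

lemma alg2: fixes s c P a b N A B :: real assumes "N \<noteq> 0"
  shows "(s - P * (a/N)) * A + (c - P * (b/N)) * B = (s*A + c*B) - P * ((a*A + b*B)/N)"
  using assms by (simp add: field_simps)

lemma key_ident: assumes "1 < n" "0 < rho t"
  shows "n * (fst (mvec n rho rho1 t) * (rho1 t * sin t + rho t * cos t)
            + snd (mvec n rho rho1 t) * (rho1 t * cos t - rho t * sin t)) = rho1 t"
proof -
  let ?P = "Phi n (xpt t \<bullet> nu rho rho1 t)" and ?N = "NN rho rho1 t"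
  let ?A = "rho1 t * sin t + rho t * cos t" and ?B = "rho1 t * cos t - rho t * sin t"
  have N: "?N \<noteq> 0" using NN_pos[of rho t rho1] assms(2) by simp
  have z: "(rho t * sin t - rho1 t * cos t) * ?A + (rho1 t * sin t + rho t * cos t) * ?B = 0"
    by algebra
  have o: "sin t * ?A + cos t * ?B = rho1 t" using sin_cos_squared_add[of t] by algebra
  have "n * (fst (mvec n rho rho1 t) * ?A + snd (mvec n rho rho1 t) * ?B)
     = (sin t - ?P * ((rho t * sin t - rho1 t * cos t) / ?N)) * ?A + (cos t - ?P * ((rho1 t * sin t + rho t * cos t)/ ?N)) * ?B"
    unfolding mvec_eq fst_conv snd_conv using assms(1) by (subst alg1) (auto simp: nu_eq)
  also have "\<dots> = (sin t * ?A + cos t * ?B) - ?P * (((rho t * sin t - rho1 t * cos t) * ?A + (rho1 t * sin t + rho t * cos t) * ?B) / ?N)"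
    using N by (rule alg2)
  also have "\<dots> = rho1 t" unfolding z o by simp
  finally show ?thesis .
qed

lemma vd_fst: "(f has_vector_derivative v) F \<Longrightarrow> ((\<lambda>x. fst (f x)) has_real_derivative fst v) F"
  unfolding has_vector_derivative_def has_field_derivative_def
  by (drule has_derivative_fst) (simp add: mult.commute[of _ "fst v"])

lemma vd_snd: "(f has_vector_derivative v) F \<Longrightarrow> ((\<lambda>x. snd (f x)) has_real_derivative snd v) F"
  unfolding has_vector_derivative_def has_field_derivative_def
  by (drule has_derivative_snd) (simp add: mult.commute[of _ "snd v"])

lemma alg3: fixes d x y p q :: real assumes "d \<noteq> 0"
  shows "(2*(d*x)*p + 2*(d*y)*q)*(inverse d/2) = x*p + y*q"
  using assms by (simp add: field_simps)

lemma deriv_unique_ivl: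
  fixes f :: "real \<Rightarrow> real"
  assumes "a < b" "t \<in> {a..b}" "(f has_real_derivative D) (at t within {a..b})"
    "(f has_real_derivative E) (at t within {a..b})"
  shows "D = E"
  using vector_derivative_unique_within_closed_interval[of a b t f D E] assms
  by (simp add: has_real_derivative_iff_has_vector_derivative cbox_interval)

lemma ortho:
  assumes n1: "1 < n" and I: "t \<in> {a..b}" "a < b"
    and pos: "\<forall>\<tau>\<in>{a..b}. 0 < rho \<tau>" "\<forall>\<tau>\<in>{a..b}. 0 < dfun n C rho rho1 \<tau>"
    and dr: "(rho has_real_derivative rho1 t) (at t within {a..b})"
    and df: "(ffun n C rho rho1 has_vector_derivative v) (at t within {a..b})"
  shows "n * (fst (mvec n rho rho1 t) * fst v + snd (mvec n rho rho1 t) * snd v) - snd v = 0"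
proof -
  let ?f = "ffun n C rho rho1" and ?S = "{a..b}"
  define F1 where "F1 \<tau> = fst (?f \<tau>)" for \<tau>
  define F2 where "F2 \<tau> = snd (?f \<tau>)" for \<tau>
  define Q where "Q \<tau> = (F1 \<tau> - rho \<tau> * sin \<tau>)\<^sup>2 + (F2 \<tau> - rho \<tau> * cos \<tau>)\<^sup>2" for \<tau>
  define h where "h \<tau> = rho \<tau> + n * sqrt (Q \<tau>) - F2 \<tau>" for \<tau>
  have d1: "(F1 has_real_derivative fst v) (at t within ?S)" unfolding F1_def by (rule vd_fst[OF df])
  have d2: "(F2 has_real_derivative snd v) (at t within ?S)" unfolding F2_def by (rule vd_snd[OF df])
  have rt: "0 < rho t" "0 < dfun n C rho rho1 t" using pos I by auto
  have sQ: "sqrt (Q t) = dfun n C rho rho1 t" unfolding Q_def F1_def F2_def by (rule f_minus[OF n1 rt])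
  have Qp: "0 < Q t" using sQ rt(2) by (metis real_sqrt_gt_0_iff)
  have dQ: "(Q has_real_derivative (2 * (F1 t - rho t * sin t) * (fst v - (rho1 t * sin t + rho t * cos t))
        + 2 * (F2 t - rho t * cos t) * (snd v - (rho1 t * cos t - rho t * sin t)))) (at t within ?S)"
    unfolding Q_def
    apply (rule derivative_eq_intros d1 d2 dr refl)+
    apply (simp add: algebra_simps)
    done
  have dsq: "((\<lambda>\<tau>. sqrt (Q \<tau>)) has_real_derivative (inverse (sqrt (Q t)) / 2 * (2 * (F1 t - rho t * sin t) * (fst v - (rho1 t * sin t + rho t * cos t))
        + 2 * (F2 t - rho t * cos t) * (snd v - (rho1 t * cos t - rho t * sin t))))) (at t within ?S)"
    by (rule DERIV_chain2[OF DERIV_real_sqrt[OF Qp] dQ])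
  have hd: "(h has_real_derivative
     (rho1 t + n * ((2 * (F1 t - rho t * sin t) * (fst v - (rho1 t * sin t + rho t * cos t))
        + 2 * (F2 t - rho t * cos t) * (snd v - (rho1 t * cos t - rho t * sin t))) * (inverse (sqrt (Q t)) / 2)) - snd v))
      (at t within ?S)"
    unfolding h_def
    apply (rule dsq d2 dr derivative_eq_intros refl)+
    apply (simp add: algebra_simps)
    done
  have hC: "h \<tau> = C" if "\<tau> \<in> ?S" for \<tau>
    unfolding h_def Q_def F1_def F2_def using h_const[of n rho \<tau> C rho1] n1 pos that by auto
  have h0: "(h has_real_derivative 0) (at t within ?S)"
    by (rule has_field_derivative_transform_within[OF DERIV_const[of C] zero_less_one I(1)]) (use hC in auto)
  have D0: "rho1 t + n * ((2 * (F1 t - rho t * sin t) * (fst v - (rho1 t * sin t + rho t * cos t))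
        + 2 * (F2 t - rho t * cos t) * (snd v - (rho1 t * cos t - rho t * sin t))) * (inverse (sqrt (Q t)) / 2)) - snd v = 0"
    by (rule deriv_unique_ivl[OF I(2) I(1) hd h0])
  let ?d = "dfun n C rho rho1 t" and ?m = "mvec n rho rho1 t"
  have e1: "F1 t - rho t * sin t = ?d * fst ?m" unfolding F1_def by (simp add: ffun_def xpt_def)
  have e2: "F2 t - rho t * cos t = ?d * snd ?m" unfolding F2_def by (simp add: ffun_def xpt_def)
  have "rho1 t + n * (fst ?m * (fst v - (rho1 t * sin t + rho t * cos t)) + snd ?m * (snd v - (rho1 t * cos t - rho t * sin t))) - snd v = 0"
    using D0 rt(2) unfolding e1 e2 sQ by (subst (asm) alg3) auto
  then show ?thesis using key_ident[of n rho t rho1] n1 rt(1) by (simp add: algebra_simps)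
qed

lemma at0_derivs:
  fixes n r2 :: real and rho rho1 :: "real \<Rightarrow> real"
  assumes n1: "1 < n" and r0: "0 < rho 0" and z: "rho1 0 = 0"
    and dr: "(rho has_real_derivative rho1 0) (at 0)"
    and dr1: "(rho1 has_real_derivative r2) (at 0)"
  defines "N \<equiv> \<lambda>t. sqrt ((rho t)\<^sup>2 + (rho1 t)\<^sup>2)"
  defines "s \<equiv> \<lambda>t. rho t / N t"
  defines "P \<equiv> \<lambda>t. s t - sqrt (n\<^sup>2 - 1 + (s t)\<^sup>2)"
  defines "X \<equiv> \<lambda>t. (rho t * sin t - rho1 t * cos t) / N t"
  defines "Y \<equiv> \<lambda>t. (rho1 t * sin t + rho t * cos t) / N t"
  shows "((\<lambda>t. (sin t - P t * X t) / n) has_real_derivative (1 - (1 - n) * (1 - r2 / rho 0)) / n) (at 0)"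
    and "((\<lambda>t. (cos t - P t * Y t) / n) has_real_derivative 0) (at 0)"
    and "(sin 0 - P 0 * X 0) / n = 0" and "(cos 0 - P 0 * Y 0) / n = 1"
proof -
  have N0: "N 0 = rho 0" using r0 z by (simp add: N_def)
  have sq0: "0 < (rho 0)\<^sup>2 + (rho1 0)\<^sup>2" using r0 by (simp add: add_pos_nonneg)
  have dN: "(N has_real_derivative 0) (at 0)"
  proof -
    have "((\<lambda>t. (rho t)\<^sup>2 + (rho1 t)\<^sup>2) has_real_derivative 0) (at 0)"
      by (rule derivative_eq_intros dr dr1 refl)+ (simp add: z)
    from DERIV_chain2[OF DERIV_real_sqrt[OF sq0] this] show ?thesis by (simp add: N_def)
  qed
  have s0: "s 0 = 1" using N0 r0 by (simp add: s_def)
  have ds: "(s has_real_derivative 0) (at 0)"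
    unfolding s_def
    by (rule derivative_eq_intros dr dN refl)+ (use N0 r0 z in simp)+
  have sq1: "0 < n\<^sup>2 - 1 + (s 0)\<^sup>2" using n1 s0 by (simp add: one_less_power add_pos_nonneg)
  have dP: "(P has_real_derivative 0) (at 0)"
  proof -
    have a: "((\<lambda>t. n\<^sup>2 - 1 + (s t)\<^sup>2) has_real_derivative 0) (at 0)"
      by (rule derivative_eq_intros ds refl)+ simp
    have b: "((\<lambda>t. sqrt (n\<^sup>2 - 1 + (s t)\<^sup>2)) has_real_derivative 0) (at 0)"
      using DERIV_chain2[OF DERIV_real_sqrt[OF sq1] a] by simp
    show ?thesis unfolding P_def by (rule derivative_eq_intros ds b refl)+ simp
  qed
  have P0: "P 0 = 1 - n" using s0 n1 by (simp add: P_def)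
  have X0: "X 0 = 0" using z by (simp add: X_def)
  have Y0: "Y 0 = 1" using N0 r0 by (simp add: Y_def)
  have dX: "(X has_real_derivative (rho 0 - r2) / rho 0) (at 0)"
    unfolding X_def
    by (rule derivative_eq_intros dr dr1 dN refl)+ (use N0 r0 z in \<open>simp_all add: field_simps\<close>)
  have dY: "(Y has_real_derivative 0) (at 0)"
    unfolding Y_def
    by (rule derivative_eq_intros dr dr1 dN refl)+ (use N0 r0 z in \<open>simp_all add: field_simps\<close>)
  show "((\<lambda>t. (sin t - P t * X t) / n) has_real_derivative (1 - (1 - n) * (1 - r2 / rho 0)) / n) (at 0)"
    by (rule derivative_eq_intros dP dX refl)+ (use n1 r0 in \<open>simp_all add: P0 X0 field_simps\<close>)
  show "((\<lambda>t. (cos t - P t * Y t) / n) has_real_derivative 0) (at 0)"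
    by (rule derivative_eq_intros dP dY refl)+ (use n1 in \<open>simp_all add: P0 Y0 field_simps\<close>)
  show "(sin 0 - P 0 * X 0) / n = 0" using X0 by simp
  show "(cos 0 - P 0 * Y 0) / n = 1" using P0 Y0 n1 by simp
qed

lemma final_alg:
  fixes nr nb r0 d0 r2 p :: real
  assumes nr: "1 < nr" "nr < nb" and r0: "0 < r0" and d0: "0 < d0"
    and E1: "r0 + d0 * ((1 - (1 - nr) * (1 - r2 / r0)) / nr) = (r0 + d0 * ((1 - (1 - nb) * (1 - r2 / r0)) / nb)) * p"
    and E2: "nr * ((1 - (1 - nr) * (1 - r2 / r0)) / nr) * (nb - 1) - (nr - 1) * nb * (((1 - (1 - nb) * (1 - r2 / r0)) / nb) * p) = 0"
  shows "r0 / d0 \<le> (Delta nr - Delta nb)\<^sup>2 / (4 * Delta nr * Delta nb)"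
proof -
  define A where "A = Delta nr"
  define B where "B = Delta nb"
  define k where "k = r0 / d0"
  define K where "K = r2 / r0"
  have nb1: "1 < nb" using nr by linarith
  have Ap: "0 < A" using nr by (simp add: A_def Delta_def)
  have Bp: "0 < B" using nb1 by (simp add: B_def Delta_def)
  have ar: "(1 - (1 - nr) * (1 - K)) / nr = 1 - K / A" using nr by (simp add: A_def Delta_def field_simps)
  have ab: "(1 - (1 - nb) * (1 - K)) / nb = 1 - K / B" using nb1 by (simp add: B_def Delta_def field_simps)
  have AB: "A \<noteq> B"
  proof
    assume "A = B"
    then have "nr * (nb - 1) = nb * (nr - 1)" using nr nb1 by (simp add: A_def B_def Delta_def field_simps)
    then show False using nr by (simp add: algebra_simps)
  qed
  have E1': "k + (1 - K / A) = (k + (1 - K / B)) * p"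
  proof -
    have "r0 + d0 * (1 - K / A) = (r0 + d0 * (1 - K / B)) * p"
      using E1 unfolding K_def[symmetric] ar ab by simp
    then have "(r0 + d0 * (1 - K / A)) / d0 = ((r0 + d0 * (1 - K / B)) * p) / d0" by simp
    then show ?thesis using d0 by (simp add: k_def field_simps)
  qed
  have E2': "A - K = p * (B - K)"
  proof -
    have e0: "nr * ((1 - (1 - nr) * (1 - K)) / nr) * (nb - 1) = (nr - 1) * nb * (((1 - (1 - nb) * (1 - K)) / nb) * p)"
      using E2 unfolding K_def by simp
    have e: "(nr - K*(nr-1))*(nb-1) = (nr-1)*((nb - K*(nb-1))*p)"
    proof -
      have r1: "nr * ((1 - (1 - nr) * (1 - K)) / nr) = nr - K*(nr-1)" using nr by (simp add: field_simps)
      have r2: "(nr - 1) * nb * (((1 - (1 - nb) * (1 - K)) / nb) * p) = (nr-1)*((nb - K*(nb-1))*p)"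
        using nb1 by (simp add: field_simps)
      show ?thesis using e0[unfolded r1 r2] .
    qed
    have q1: "A - K = (nr - K*(nr-1)) / (nr - 1)" using nr by (simp add: A_def Delta_def field_simps)
    have q2: "p * (B - K) = (p * (nb - K*(nb-1))) / (nb - 1)" using nb1 by (simp add: B_def Delta_def field_simps)
    have "(nr - K*(nr-1)) / (nr - 1) = (p * (nb - K*(nb-1))) / (nb - 1)"
      using nr nb1 e by (simp add: frac_eq_eq algebra_simps)
    then show ?thesis unfolding q1 q2 .
  qed
  define X where "X = (k+1)*A - K"
  define Y where "Y = (k+1)*B - K"
  have E1'': "X*B = Y*A*p"
  proof -
    have "(k + (1 - K / A))*(A*B) = ((k + (1 - K / B))*p)*(A*B)" using E1' by simp
    moreover have "(k + (1 - K / A))*(A*B) = X*B" using Ap by (simp add: X_def field_simps)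
    moreover have "((k + (1 - K / B))*p)*(A*B) = Y*A*p" using Bp by (simp add: Y_def field_simps)
    ultimately show ?thesis by simp
  qed
  have H2: "X*(B-K)*B = Y*(A-K)*A"
  proof -
    have "X*(B-K)*B = (X*B)*(B-K)" by (simp add: algebra_simps)
    also have "\<dots> = (Y*A)*(p*(B-K))" unfolding E1'' by (simp add: mult.assoc)
    also have "\<dots> = (Y*A)*(A-K)" unfolding E2' ..
    also have "\<dots> = Y*(A-K)*A" by (simp add: algebra_simps)
    finally show ?thesis .
  qed
  have "(B - A) * ((k+1)*A*B - K*(A+B) + K\<^sup>2) = X*(B-K)*B - Y*(A-K)*A"
    unfolding X_def Y_def by (simp add: algebra_simps power2_eq_square)
  then have "(B - A) * ((k+1)*A*B - K*(A+B) + K\<^sup>2) = 0" using H2 by simp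
  then have q: "(k+1)*A*B = K*(A+B) - K\<^sup>2" using AB by simp
  have "4 * k * A * B = (A - B)\<^sup>2 - (2*K - A - B)\<^sup>2"
    using q by (simp add: algebra_simps power2_eq_square)
  then have "4 * k * A * B \<le> (A - B)\<^sup>2" by simp
  then have "k * (4 * A * B) \<le> (A - B)\<^sup>2" by (simp add: algebra_simps)
  then have "k \<le> (A - B)\<^sup>2 / (4 * A * B)" using Ap Bp by (simp add: pos_le_divide_eq)
  then show ?thesis by (simp add: k_def A_def B_def)
qed

lemma at0_mvec:
  fixes n r2 \<delta> C :: real and rho rho1 :: "real \<Rightarrow> real"
  assumes n1: "1 < n" and d: "0 < \<delta>" and pos: "\<forall>t\<in>{-\<delta><..<\<delta>}. 0 < rho t" and z: "rho1 0 = 0"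
    and dr: "(rho has_real_derivative rho1 0) (at 0)"
    and dr1: "(rho1 has_real_derivative r2) (at 0)"
  shows "((\<lambda>t. fst (mvec n rho rho1 t)) has_real_derivative (1 - (1 - n) * (1 - r2 / rho 0)) / n) (at 0)"
    and "((\<lambda>t. snd (mvec n rho rho1 t)) has_real_derivative 0) (at 0)"
    and "fst (mvec n rho rho1 0) = 0" and "snd (mvec n rho rho1 0) = 1"
    and "((\<lambda>t. fst (ffun n C rho rho1 t)) has_real_derivative
           (rho 0 + dfun n C rho rho1 0 * ((1 - (1 - n) * (1 - r2 / rho 0)) / n))) (at 0)"
proof -
  have r0: "0 < rho 0" using pos d by auto
  note D = at0_derivs[OF n1 r0 z dr dr1]
  have e1: "fst (mvec n rho rho1 t) = (sin t - (rho t / sqrt ((rho t)\<^sup>2 + (rho1 t)\<^sup>2) - sqrt (n\<^sup>2 - 1 + (rho t / sqrt ((rho t)\<^sup>2 + (rho1 t)\<^sup>2))\<^sup>2)) *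
           ((rho t * sin t - rho1 t * cos t) / sqrt ((rho t)\<^sup>2 + (rho1 t)\<^sup>2))) / n"
    and e2: "snd (mvec n rho rho1 t) = (cos t - (rho t / sqrt ((rho t)\<^sup>2 + (rho1 t)\<^sup>2) - sqrt (n\<^sup>2 - 1 + (rho t / sqrt ((rho t)\<^sup>2 + (rho1 t)\<^sup>2))\<^sup>2)) *
           ((rho1 t * sin t + rho t * cos t) / sqrt ((rho t)\<^sup>2 + (rho1 t)\<^sup>2))) / n"
    if "0 < rho t" for t
    unfolding mvec_eq xnu[of rho t rho1, OF that] by (simp_all add: nu_eq NN_def Phi_def)
  have o: "open {-\<delta><..<\<delta>}" "(0::real) \<in> {-\<delta><..<\<delta>}" using d by auto
  show mx: "((\<lambda>t. fst (mvec n rho rho1 t)) has_real_derivative (1 - (1 - n) * (1 - r2 / rho 0)) / n) (at 0)"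
    by (rule has_field_derivative_transform_within_open[OF D(1) o]) (use pos e1 in auto)
  show my: "((\<lambda>t. snd (mvec n rho rho1 t)) has_real_derivative 0) (at 0)"
    by (rule has_field_derivative_transform_within_open[OF D(2) o]) (use pos e2 in auto)
  show m0: "fst (mvec n rho rho1 0) = 0" using D(3) e1[OF r0] by simp
  show m1: "snd (mvec n rho rho1 0) = 1" using D(4) e2[OF r0] by simp
  have ef: "fst (ffun n C rho rho1 t) = rho t * sin t + ((C - rho t * (1 - cos t)) / (n - snd (mvec n rho rho1 t))) * fst (mvec n rho rho1 t)" for t
    by (simp add: ffun_def dfun_def evec_inner xpt_def)
  have "((\<lambda>t. rho t * sin t + ((C - rho t * (1 - cos t)) / (n - snd (mvec n rho rho1 t))) * fst (mvec n rho rho1 t))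
        has_real_derivative (rho 0 + dfun n C rho rho1 0 * ((1 - (1 - n) * (1 - r2 / rho 0)) / n))) (at 0)"
    apply (rule derivative_eq_intros dr mx my refl)+
    using n1 apply (simp add: m1)
    apply (rule refl)
    apply (rule mx)
    apply (rule refl)
    apply (simp add: m0 m1 z dfun_def evec_inner mult.commute)
    done
  then show "((\<lambda>t. fst (ffun n C rho rho1 t)) has_real_derivative
           (rho 0 + dfun n C rho rho1 0 * ((1 - (1 - n) * (1 - r2 / rho 0)) / n))) (at 0)"
    unfolding ef .
qed

lemma fixed_pt:
  fixes nr nb Cr Cb t :: real and rho rho1 :: "real \<Rightarrow> real"
  assumes nr: "1 < nr" "nr < nb" and rt: "0 < rho t"
    and dpr: "0 < dfun nr Cr rho rho1 t" and dpb: "0 < dfun nb Cb rho rho1 t"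
    and eq: "ffun nr Cr rho rho1 t = ffun nb Cb rho rho1 t"
    and G: "(nr * fst (mvec nr rho rho1 t)) * (nb * snd (mvec nb rho rho1 t) - 1)
            - (nr * snd (mvec nr rho rho1 t) - 1) * (nb * fst (mvec nb rho rho1 t)) = 0"
  shows "sin t = 0" "fst (nu rho rho1 t) = 0" "dfun nr Cr rho rho1 t = dfun nb Cb rho rho1 t"
proof -
  have nb1: "1 < nb" using nr by linarith
  define dr where "dr = dfun nr Cr rho rho1 t"
  define db where "db = dfun nb Cb rho rho1 t"
  define p where "p = fst (mvec nr rho rho1 t)"
  define q where "q = snd (mvec nr rho rho1 t)"
  define p' where "p' = fst (mvec nb rho rho1 t)"
  define q' where "q' = snd (mvec nb rho rho1 t)"
  have c1: "dr * p = db * p'" using arg_cong[OF eq, of fst]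
    by (simp add: ffun_def xpt_def dr_def db_def p_def p'_def)
  have c2: "dr * q = db * q'" using arg_cong[OF eq, of snd]
    by (simp add: ffun_def xpt_def dr_def db_def q_def q'_def)
  have u1: "p\<^sup>2 + q\<^sup>2 = 1" unfolding p_def q_def using m_unit[of nr rho t rho1] nr rt by simp
  have u2: "p'\<^sup>2 + q'\<^sup>2 = 1" unfolding p'_def q'_def using m_unit[of nb rho t rho1] nb1 rt by simp
  have "dr\<^sup>2 = (dr*p)\<^sup>2 + (dr*q)\<^sup>2" using u1 by (simp add: power_mult_distrib algebra_simps flip: distrib_left)
  also have "\<dots> = (db*p')\<^sup>2 + (db*q')\<^sup>2" using c1 c2 by simp
  also have "\<dots> = db\<^sup>2" using u2 by (simp add: power_mult_distrib algebra_simps flip: distrib_left)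
  finally have "dr\<^sup>2 = db\<^sup>2" .
  then have dd: "dr = db" using dpr dpb unfolding dr_def[symmetric] db_def[symmetric]
    by (simp add: power2_eq_iff_nonneg)
  show "dfun nr Cr rho rho1 t = dfun nb Cb rho rho1 t" using dd by (simp add: dr_def db_def)
  have pp: "p = p'" using c1 dd dpr unfolding dr_def[symmetric] by simp
  have qq: "q = q'" using c2 dd dpr unfolding dr_def[symmetric] by simp
  have "(nr * p) * (nb * q - 1) - (nr * q - 1) * (nb * p) = p * (nb - nr)" by (simp add: algebra_simps)
  then have "p * (nb - nr) = 0" using G unfolding p_def[symmetric] q_def[symmetric] p'_def[symmetric] q'_def[symmetric] pp[symmetric] qq[symmetric] by simp
  then have p0: "p = 0" using nr by simp
  then have p'0: "p' = 0" using pp by simp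
  let ?s = "xpt t \<bullet> nu rho rho1 t" and ?x = "fst (nu rho rho1 t)"
  have a: "sin t = Phi nr ?s * ?x"
  proof -
    have "p = (sin t - Phi nr ?s * ?x) / nr" unfolding p_def by (simp add: mvec_eq)
    then show ?thesis using p0 nr by simp
  qed
  have b: "sin t = Phi nb ?s * ?x"
  proof -
    have "p' = (sin t - Phi nb ?s * ?x) / nb" unfolding p'_def by (simp add: mvec_eq)
    then show ?thesis using p'0 nb1 by simp
  qed
  have "sqrt (nr\<^sup>2 - 1 + ?s\<^sup>2) < sqrt (nb\<^sup>2 - 1 + ?s\<^sup>2)"
    using nr by (simp add: power_strict_mono)
  then have "Phi nr ?s \<noteq> Phi nb ?s" by (simp add: Phi_def)
  then show x0: "?x = 0" using a b by simp
  show "sin t = 0" using a x0 by simp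
qed

lemma perp2: fixes a1 a2 b1 b2 y1 y2 :: real
  assumes "a1* y1 + a2* y2 = 0" "b1* y1 + b2* y2 = 0" "(y1, y2) \<noteq> (0, 0)"
  shows "a1* b2 - a2* b1 = 0"
proof -
  have "(a1* b2 - a2* b1) * y1 = b2*(a1* y1 + a2* y2) - a2*(b1* y1 + b2* y2)" by (simp add: algebra_simps)
  then have h1: "(a1* b2 - a2* b1) * y1 = 0" using assms by simp
  have "(a1* b2 - a2* b1) * y2 = a1*(b1* y1 + b2* y2) - b1*(a1* y1 + a2* y2)" by (simp add: algebra_simps)
  then have h2: "(a1* b2 - a2* b1) * y2 = 0" using assms by simp
  show ?thesis using h1 h2 assms(3) by auto
qed

lemma cross_zero:
  fixes nr nb Cr Cb \<delta> t :: real and rho rho1 \<phi> \<phi>1 :: "real \<Rightarrow> real"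
  assumes nr: "1 < nr" "nr < nb" and d: "0 < \<delta>" and t: "t \<in> {-\<delta>..\<delta>}"
    and rho_pos: "\<forall>t\<in>{-\<delta>..\<delta>}. 0 < rho t"
    and rd: "\<forall>t\<in>{-\<delta>..\<delta>}. (rho has_real_derivative rho1 t) (at t within {-\<delta>..\<delta>})"
    and d_pos: "\<forall>t\<in>{-\<delta>..\<delta>}. 0 < dfun nr Cr rho rho1 t"
               "\<forall>t\<in>{-\<delta>..\<delta>}. 0 < dfun nb Cb rho rho1 t"
    and normals: "has_normal_on (ffun nr Cr rho rho1) {-\<delta>..\<delta>}"
                 "has_normal_on (ffun nb Cb rho rho1) {-\<delta>..\<delta>}"
    and phi_maps: "\<forall>t\<in>{-\<delta>..\<delta>}. \<phi> t \<in> {-\<delta>..\<delta>}"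
    and phi_d: "\<forall>t\<in>{-\<delta>..\<delta>}. (\<phi> has_real_derivative \<phi>1 t) (at t within {-\<delta>..\<delta>})"
    and match: "\<forall>t\<in>{-\<delta>..\<delta>}. ffun nr Cr rho rho1 t = ffun nb Cb rho rho1 (\<phi> t)"
  shows "(nr * fst (mvec nr rho rho1 t)) * (nb * snd (mvec nb rho rho1 (\<phi> t)) - 1)
            - (nr * snd (mvec nr rho rho1 t) - 1) * (nb * fst (mvec nb rho rho1 (\<phi> t))) = 0"
proof -
  let ?S = "{-\<delta>..\<delta>}"
  have nb1: "1 < nb" using nr by linarith
  have ab: "-\<delta> < \<delta>" using d by simp
  have pt: "\<phi> t \<in> ?S" using phi_maps t by blast
  obtain v where v: "(ffun nr Cr rho rho1 has_vector_derivative v) (at t within ?S)" "v \<noteq> 0"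
    using normals(1) t unfolding has_normal_on_def by blast
  obtain w where w: "(ffun nb Cb rho rho1 has_vector_derivative w) (at (\<phi> t) within ?S)"
    using normals(2) pt unfolding has_normal_on_def by blast
  have dphi: "(\<phi> has_vector_derivative \<phi>1 t) (at t within ?S)"
    using phi_d t by (simp add: has_real_derivative_iff_has_vector_derivative)
  have "((ffun nb Cb rho rho1 \<circ> \<phi>) has_vector_derivative (\<phi>1 t *\<^sub>R w)) (at t within ?S)"
    by (rule vector_diff_chain_within[OF dphi has_vector_derivative_within_subset[OF w]]) (use phi_maps in auto)
  then have "(ffun nr Cr rho rho1 has_vector_derivative (\<phi>1 t *\<^sub>R w)) (at t within ?S)"
    by (rule has_vector_derivative_transform_within[OF _ zero_less_one t]) (use match in auto)
  then have vw: "v = \<phi>1 t *\<^sub>R w"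
    using vector_derivative_unique_within_closed_interval[OF ab, of t] v(1) t by (simp add: cbox_interval)
  have o1: "nr * (fst (mvec nr rho rho1 t) * fst v + snd (mvec nr rho rho1 t) * snd v) - snd v = 0"
    by (rule ortho[OF nr(1) t ab rho_pos d_pos(1)]) (use rd t v in auto)
  have o2: "nb * (fst (mvec nb rho rho1 (\<phi> t)) * fst w + snd (mvec nb rho rho1 (\<phi> t)) * snd w) - snd w = 0"
    by (rule ortho[OF nb1 pt ab rho_pos d_pos(2)]) (use rd pt w in auto)
  have o2': "nb * (fst (mvec nb rho rho1 (\<phi> t)) * fst v + snd (mvec nb rho rho1 (\<phi> t)) * snd v) - snd v = 0"
  proof -
    have "nb * (fst (mvec nb rho rho1 (\<phi> t)) * fst v + snd (mvec nb rho rho1 (\<phi> t)) * snd v) - snd v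
       = \<phi>1 t * (nb * (fst (mvec nb rho rho1 (\<phi> t)) * fst w + snd (mvec nb rho rho1 (\<phi> t)) * snd w) - snd w)"
      unfolding vw by (simp add: algebra_simps)
    then show ?thesis using o2 by simp
  qed
  show ?thesis
    by (rule perp2[of _ "fst v" _ "snd v"]) (use o1 o2' v(2) in \<open>auto simp: algebra_simps prod_eq_iff\<close>)
qed
theorem corollary5p8:
  fixes n_r n_b \<delta> C_r C_b :: real
    and rho rho1 rho2 \<phi> \<phi>1 :: "real \<Rightarrow> real"
  assumes n_order: "1 < n_r" "n_r < n_b"
    and delta: "0 < \<delta>" "\<delta> < pi / 2"
    and rho_pos: "\<forall>t\<in>{-\<delta>..\<delta>}. 0 < rho t"
    and rho_C2: "\<forall>t\<in>{-\<delta>..\<delta>}. (rho has_real_derivative rho1 t) (at t within {-\<delta>..\<delta>})"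
                "\<forall>t\<in>{-\<delta>..\<delta>}. (rho1 has_real_derivative rho2 t) (at t within {-\<delta>..\<delta>})"
                "continuous_on {-\<delta>..\<delta>} rho2"
    and d_pos: "\<forall>t\<in>{-\<delta>..\<delta>}. 0 < dfun n_r C_r rho rho1 t"
               "\<forall>t\<in>{-\<delta>..\<delta>}. 0 < dfun n_b C_b rho rho1 t"
    and normals: "has_normal_on (ffun n_r C_r rho rho1) {-\<delta>..\<delta>}"
                 "has_normal_on (ffun n_b C_b rho rho1) {-\<delta>..\<delta>}"
    and phi_maps: "\<forall>t\<in>{-\<delta>..\<delta>}. \<phi> t \<in> {-\<delta>..\<delta>}"
    and phi_C1: "\<forall>t\<in>{-\<delta>..\<delta>}. (\<phi> has_real_derivative \<phi>1 t) (at t within {-\<delta>..\<delta>})"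
                "continuous_on {-\<delta>..\<delta>} \<phi>1"
    and match: "\<forall>t\<in>{-\<delta>..\<delta>}. ffun n_r C_r rho rho1 t = ffun n_b C_b rho rho1 (\<phi> t)"
  shows "rho 0 / dfun n_r C_r rho rho1 0
           \<le> (Delta n_r - Delta n_b)\<^sup>2 / (4 * Delta n_r * Delta n_b)"
  proof -
  let ?S = "{-\<delta>..\<delta>}" and ?T = "{-\<delta><..<\<delta>}"
  have nb1: "1 < n_b" using n_order by linarith
  have cz: "(n_r * fst (mvec n_r rho rho1 t)) * (n_b * snd (mvec n_b rho rho1 (\<phi> t)) - 1)
            - (n_r * snd (mvec n_r rho rho1 t) - 1) * (n_b * fst (mvec n_b rho rho1 (\<phi> t))) = 0"
    if "t \<in> ?S" for t
    by (rule cross_zero[OF n_order delta(1) that rho_pos rho_C2(1) d_pos normals phi_maps phi_C1(1) match])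
  have cphi: "continuous_on ?S \<phi>"
    by (rule DERIV_continuous_on) (use phi_C1(1) in auto)
  have "continuous_on ?S (\<lambda>t. \<phi> t - t)" by (intro continuous_on_diff cphi continuous_on_id)
  moreover have "\<phi> \<delta> - \<delta> \<le> 0" "0 \<le> \<phi> (-\<delta>) - (-\<delta>)"
  proof -
    have "-\<delta> \<in> ?S" "\<delta> \<in> ?S" using delta(1) by auto
    then have "\<phi> (-\<delta>) \<in> ?S" "\<phi> \<delta> \<in> ?S" using phi_maps by blast+
    then show "\<phi> \<delta> - \<delta> \<le> 0" "0 \<le> \<phi> (-\<delta>) - (-\<delta>)" by auto
  qed
  ultimately obtain t0 where t0: "-\<delta> \<le> t0" "t0 \<le> \<delta>" "\<phi> t0 - t0 = 0"
    using IVT2'[of "\<lambda>t. \<phi> t - t" \<delta> 0 "-\<delta>"] delta(1) by auto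
  have t0S: "t0 \<in> ?S" using t0 by auto
  have pt0: "\<phi> t0 = t0" using t0 by simp
  note FP = fixed_pt[OF n_order, of rho t0 C_r rho1 C_b]
  have fp: "sin t0 = 0" "fst (nu rho rho1 t0) = 0" "dfun n_r C_r rho rho1 t0 = dfun n_b C_b rho rho1 t0"
    using FP rho_pos d_pos match cz t0S pt0 by (metis pt0)+
  have "t0 = 0"
    by (rule sin_eq_0_pi) (use t0 delta fp(1) in auto)
  then have phi0: "\<phi> 0 = 0" and nx0: "fst (nu rho rho1 0) = 0"
     and deq: "dfun n_r C_r rho rho1 0 = dfun n_b C_b rho rho1 0" using pt0 fp by auto
  have r0: "0 < rho 0" using rho_pos delta by auto
  have z: "rho1 0 = 0"
    using nx0 NN_pos[of rho 0 rho1, OF r0] by (simp add: nu_eq)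
  have int: "at 0 within ?S = at 0" by (rule at_within_interior) (use delta in simp)
  have zS: "(0::real) \<in> ?S" using delta by auto
  have dr: "(rho has_real_derivative rho1 0) (at 0)" using bspec[OF rho_C2(1) zS] unfolding int .
  have dr1: "(rho1 has_real_derivative rho2 0) (at 0)" using bspec[OF rho_C2(2) zS] unfolding int .
  have dph: "(\<phi> has_real_derivative \<phi>1 0) (at 0)" using bspec[OF phi_C1(1) zS] unfolding int .
  have posT: "\<forall>t\<in>?T. 0 < rho t" using rho_pos by auto
  note R = at0_mvec[OF n_order(1) delta(1) posT z dr dr1]
  note RF = at0_mvec(5)[where C=C_r, OF n_order(1) delta(1) posT z dr dr1]
  note B = at0_mvec[OF nb1 delta(1) posT z dr dr1]
  note BF = at0_mvec(5)[where C=C_b, OF nb1 delta(1) posT z dr dr1]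
  define ar where "ar = (1 - (1 - n_r) * (1 - rho2 0 / rho 0)) / n_r"
  define ab where "ab = (1 - (1 - n_b) * (1 - rho2 0 / rho 0)) / n_b"
  have o: "open ?T" "(0::real) \<in> ?T" using delta by auto
  have Bf: "((\<lambda>t. fst (ffun n_b C_b rho rho1 t)) has_real_derivative
           (rho 0 + dfun n_b C_b rho rho1 0 * ab)) (at (\<phi> 0))"
    using BF unfolding phi0 ab_def .
  have "((\<lambda>t. fst (ffun n_b C_b rho rho1 (\<phi> t))) has_real_derivative
           (rho 0 + dfun n_b C_b rho rho1 0 * ab) * \<phi>1 0) (at 0)"
    by (rule DERIV_chain2[OF Bf dph])
  then have "((\<lambda>t. fst (ffun n_r C_r rho rho1 t)) has_real_derivative
           (rho 0 + dfun n_b C_b rho rho1 0 * ab) * \<phi>1 0) (at 0)"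
    by (rule has_field_derivative_transform_within_open[OF _ o]) (use match in auto)
  then have E1: "rho 0 + dfun n_r C_r rho rho1 0 * ar = (rho 0 + dfun n_r C_r rho rho1 0 * ab) * \<phi>1 0"
    using DERIV_unique RF unfolding ar_def deq by blast
  have mbx: "((\<lambda>t. fst (mvec n_b rho rho1 (\<phi> t))) has_real_derivative ab * \<phi>1 0) (at 0)"
    by (rule DERIV_chain2[OF _ dph]) (use B(1) in \<open>simp add: phi0 ab_def\<close>)
  have mby: "((\<lambda>t. snd (mvec n_b rho rho1 (\<phi> t))) has_real_derivative 0 * \<phi>1 0) (at 0)"
    by (rule DERIV_chain2[OF _ dph]) (use B(2) in \<open>simp add: phi0\<close>)
  have mrx: "((\<lambda>t. fst (mvec n_r rho rho1 t)) has_real_derivative ar) (at 0)"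
    using R(1) unfolding ar_def .
  have Gd: "((\<lambda>t. (n_r * fst (mvec n_r rho rho1 t)) * (n_b * snd (mvec n_b rho rho1 (\<phi> t)) - 1)
            - (n_r * snd (mvec n_r rho rho1 t) - 1) * (n_b * fst (mvec n_b rho rho1 (\<phi> t))))
        has_real_derivative (n_r * ar * (n_b - 1) - (n_r - 1) * n_b * (ab * \<phi>1 0))) (at 0)"
    apply (rule derivative_eq_intros mrx R(2) mbx mby refl)+
    apply (simp add: R(3) R(4) B(3) B(4) phi0 algebra_simps)
    done
  have "((\<lambda>t. (n_r * fst (mvec n_r rho rho1 t)) * (n_b * snd (mvec n_b rho rho1 (\<phi> t)) - 1)
            - (n_r * snd (mvec n_r rho rho1 t) - 1) * (n_b * fst (mvec n_b rho rho1 (\<phi> t))))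
        has_real_derivative 0) (at 0)"
    by (rule has_field_derivative_transform_within_open[OF DERIV_const o]) (use cz in auto)
  then have E2: "n_r * ar * (n_b - 1) - (n_r - 1) * n_b * (ab * \<phi>1 0) = 0"
    using DERIV_unique Gd by blast
  show ?thesis
    by (rule final_alg[OF n_order r0 _ E1[unfolded ar_def ab_def]]) (use d_pos delta E2 in \<open>auto simp: ar_def ab_def\<close>)
qed
end
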